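(* Consider the following stochastic system on a time horizon $\{0,\dots,T\}$. The plant evolves as $x^{t+1}=F_t(x^t,v^t)$ with $F_t:\mathbb{R}^n\times\mathbb{R}^m\to\mathbb{R}^n$, where $v^t=b^tu^t$, $u^t\in\mathbb{R}^m$ is the controller's action and $b^t\in\{0,1\}$ is the transmission state of the link. The link regime $s^t$ takes values in the finite set $\mathcal{F}=\{1,\dots,|\mathcal{F}|\}$; at each time $t$ the jammer takes an action $a^t\in\mathcal{A}=\{1,\dots,N\}$, which selects a row-stochastic matrix $P^t(a^t)\in\mathbb{R}^{|\mathcal{F}|\times|\mathcal{F}|}$, and the new regime is drawn according to $\mathrm{Pr}(s^{t+1}=i\mid s^t=j,a^t=a)=P^t_{ji}(a)$ (conditionally on $s^t,a^t$, independently of the rest of the past). Given $s^{t+1}$, the variable $b^t$ is conditionally independent of all previous regimes, of the current and past plant states and of the current and past actions of both players, with $\mathrm{Pr}(b^t=1\mid s^{t+1}=j)=q^t_j\in[0,1]$. Then, given a sequence of controller's and jammer's actions, the joint state-link process $\{(x^t,s^t)\}_{t=0}^T$ is a Markov process: for every $t=0,\dots,T-1$ and all Borel sets $\Lambda\subseteq\mathbb{R}^n$, $S\subseteq\mathcal{F}$, \[ \mathrm{Pr}\big(x^{t+1}\in\Lambda,s^{t+1}\in S\,\big|\,\{(x^\theta,s^\theta),u^\theta,a^\theta\}_{\theta=0}^t\big)=\mathrm{Pr}\big(x^{t+1}\in\Lambda,s^{t+1}\in S\,\big|\,x^t,s^t,u^t,a^t\big). \]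
   Context: The initial plant state $x^0$ and the initial regime $s^0$ are given (deterministic). $P^t_{ji}(a)$ denotes the $(j,i)$ entry of $P^t(a)$. *)

theory Defs
  imports "HOL-Probability.Probability"
begin

definition cprob :: "'w measure \<Rightarrow> 'w set \<Rightarrow> 'w set \<Rightarrow> real" where
  "cprob M A B = measure M (A \<inter> B) / measure M B"

end

theory Submission
  imports Defs
begin

primrec Xs :: "(nat \<Rightarrow> real^'n \<Rightarrow> real^'m \<Rightarrow> real^'n) \<Rightarrow> (nat \<Rightarrow> real^'m) \<Rightarrow> real^'n \<Rightarrow> nat \<Rightarrow> (real^'n) set" where
  "Xs F u x0 0 = {x0}"
| "Xs F u x0 (Suc k) = (\<lambda>v. F k v 0) ` Xs F u x0 k \<union> (\<lambda>v. F k v (u k)) ` Xs F u x0 k"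

theorem proposition1:
  fixes M :: "'w measure"
    and T K N :: nat
    and F :: "nat \<Rightarrow> real^'n \<Rightarrow> real^'m \<Rightarrow> real^'n"
    and P :: "nat \<Rightarrow> nat \<Rightarrow> nat \<Rightarrow> nat \<Rightarrow> real"
    and q :: "nat \<Rightarrow> nat \<Rightarrow> real"
    and u :: "nat \<Rightarrow> real^'m"
    and a :: "nat \<Rightarrow> nat"
    and x :: "nat \<Rightarrow> 'w \<Rightarrow> real^'n"
    and s :: "nat \<Rightarrow> 'w \<Rightarrow> nat"
    and b :: "nat \<Rightarrow> 'w \<Rightarrow> nat"
    and x0 :: "real^'n" and s0 :: nat
  assumes prob: "prob_space M"
    and K_pos: "K \<ge> 1" and N_pos: "N \<ge> 1"
    and a_range: "\<And>t. t < T \<Longrightarrow> a t \<in> {1..N}"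
    and P_nonneg: "\<And>t c j i. t < T \<Longrightarrow> c \<in> {1..N} \<Longrightarrow> j \<in> {1..K} \<Longrightarrow> i \<in> {1..K}
                     \<Longrightarrow> 0 \<le> P t c j i"
    and P_rows: "\<And>t c j. t < T \<Longrightarrow> c \<in> {1..N} \<Longrightarrow> j \<in> {1..K}
                     \<Longrightarrow> (\<Sum>i\<in>{1..K}. P t c j i) = 1"
    and q_range: "\<And>t j. t < T \<Longrightarrow> j \<in> {1..K} \<Longrightarrow> 0 \<le> q t j \<and> q t j \<le> 1"
    and s_meas: "\<And>t. s t \<in> measurable M (count_space UNIV)"
    and b_meas: "\<And>t. b t \<in> measurable M (count_space UNIV)"
    and s_range: "\<And>t \<omega>. t \<le> T \<Longrightarrow> \<omega> \<in> space M \<Longrightarrow> s t \<omega> \<in> {1..K}"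
    and b_range: "\<And>t \<omega>. t < T \<Longrightarrow> \<omega> \<in> space M \<Longrightarrow> b t \<omega> \<in> {0, 1}"
    and s0_range: "s0 \<in> {1..K}"
    and x_init: "\<And>\<omega>. \<omega> \<in> space M \<Longrightarrow> x 0 \<omega> = x0"
    and s_init: "\<And>\<omega>. \<omega> \<in> space M \<Longrightarrow> s 0 \<omega> = s0"
    and plant: "\<And>t \<omega>. t < T \<Longrightarrow> \<omega> \<in> space M \<Longrightarrow>
                  x (Suc t) \<omega> = F t (x t \<omega>) (real (b t \<omega>) *\<^sub>R u t)"
    and regime_trans: "\<And>t \<xi> \<sigma> i. t < T \<Longrightarrow>
          measure M {\<omega>\<in>space M. \<forall>\<theta>\<le>t. x \<theta> \<omega> = \<xi> \<theta> \<and> s \<theta> \<omega> = \<sigma> \<theta>} > 0 \<Longrightarrow>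
          cprob M {\<omega>\<in>space M. s (Suc t) \<omega> = i}
                  {\<omega>\<in>space M. \<forall>\<theta>\<le>t. x \<theta> \<omega> = \<xi> \<theta> \<and> s \<theta> \<omega> = \<sigma> \<theta>}
            = P t (a t) (\<sigma> t) i"
    and link_trans: "\<And>t \<xi> \<sigma>. t < T \<Longrightarrow>
          measure M {\<omega>\<in>space M. (\<forall>\<theta>\<le>t. x \<theta> \<omega> = \<xi> \<theta>) \<and> (\<forall>\<theta>\<le>Suc t. s \<theta> \<omega> = \<sigma> \<theta>)} > 0 \<Longrightarrow>
          cprob M {\<omega>\<in>space M. b t \<omega> = 1}
                  {\<omega>\<in>space M. (\<forall>\<theta>\<le>t. x \<theta> \<omega> = \<xi> \<theta>) \<and> (\<forall>\<theta>\<le>Suc t. s \<theta> \<omega> = \<sigma> \<theta>)}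
            = q t (\<sigma> (Suc t))"
  shows "\<forall>t < T. \<forall>\<Lambda> \<in> sets (borel :: (real^'n) measure). \<forall>S \<subseteq> {1..K}. \<forall>\<xi> \<sigma>.
          measure M {\<omega>\<in>space M. \<forall>\<theta>\<le>t. x \<theta> \<omega> = \<xi> \<theta> \<and> s \<theta> \<omega> = \<sigma> \<theta>} > 0 \<longrightarrow>
          cprob M {\<omega>\<in>space M. x (Suc t) \<omega> \<in> \<Lambda> \<and> s (Suc t) \<omega> \<in> S}
                  {\<omega>\<in>space M. \<forall>\<theta>\<le>t. x \<theta> \<omega> = \<xi> \<theta> \<and> s \<theta> \<omega> = \<sigma> \<theta>}
          = cprob M {\<omega>\<in>space M. x (Suc t) \<omega> \<in> \<Lambda> \<and> s (Suc t) \<omega> \<in> S}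
                  {\<omega>\<in>space M. x t \<omega> = \<xi> t \<and> s t \<omega> = \<sigma> t}"
  proof -
  interpret prob_space M by (rule prob)
  have bset: "\<And>t c. {\<omega>\<in>space M. b t \<omega> = c} \<in> sets M" using b_meas by measurable
  have sset: "\<And>t c. {\<omega>\<in>space M. s t \<omega> = c} \<in> sets M" using s_meas by measurable
  have ssetS: "\<And>t S. {\<omega>\<in>space M. s t \<omega> \<in> S} \<in> sets M" using s_meas by measurable
  have xset: "{\<omega>\<in>space M. x \<theta> \<omega> \<in> A} \<in> sets M" if "\<theta> \<le> T" for \<theta> A
    using that
  proof (induction \<theta> arbitrary: A)
    case 0
    have "{\<omega>\<in>space M. x 0 \<omega> \<in> A} = (if x0 \<in> A then space M else {})"
      using x_init by auto
    then show ?case by simp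
  next
    case (Suc k)
    then have k: "k < T" by simp
    have "{\<omega>\<in>space M. x (Suc k) \<omega> \<in> A} =
       ({\<omega>\<in>space M. b k \<omega> = 0} \<inter> {\<omega>\<in>space M. x k \<omega> \<in> {y. F k y 0 \<in> A}}) \<union>
       ({\<omega>\<in>space M. b k \<omega> = 1} \<inter> {\<omega>\<in>space M. x k \<omega> \<in> {y. F k y (u k) \<in> A}})"
    proof (rule set_eqI, rule iffI)
      fix \<omega> assume "\<omega> \<in> {\<omega>\<in>space M. x (Suc k) \<omega> \<in> A}"
      then have w: "\<omega> \<in> space M" "x (Suc k) \<omega> \<in> A" by auto
      have "b k \<omega> = 0 \<or> b k \<omega> = 1" using b_range[OF k w(1)] by auto
      then show "\<omega> \<in> ({\<omega>\<in>space M. b k \<omega> = 0} \<inter> {\<omega>\<in>space M. x k \<omega> \<in> {y. F k y 0 \<in> A}}) \<union>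
       ({\<omega>\<in>space M. b k \<omega> = 1} \<inter> {\<omega>\<in>space M. x k \<omega> \<in> {y. F k y (u k) \<in> A}})"
        using w plant[OF k w(1)] by auto
    next
      fix \<omega> assume "\<omega> \<in> ({\<omega>\<in>space M. b k \<omega> = 0} \<inter> {\<omega>\<in>space M. x k \<omega> \<in> {y. F k y 0 \<in> A}}) \<union>
       ({\<omega>\<in>space M. b k \<omega> = 1} \<inter> {\<omega>\<in>space M. x k \<omega> \<in> {y. F k y (u k) \<in> A}})"
      then show "\<omega> \<in> {\<omega>\<in>space M. x (Suc k) \<omega> \<in> A}" using plant[OF k] by auto
    qed
    note eq = this
    have kT: "k \<le> T" using k by simp
    show ?case unfolding eq
      by (intro sets.Un sets.Int bset Suc.IH[OF kT])
  qed
  have xval: "x \<theta> \<omega> \<in> Xs F u x0 \<theta>" if "\<theta> \<le> T" "\<omega> \<in> space M" for \<theta> \<omega>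
    using that
  proof (induction \<theta>)
    case 0
    then show ?case using x_init by simp
  next
    case (Suc k)
    then have k: "k < T" by simp
    have "b k \<omega> = 0 \<or> b k \<omega> = 1" using b_range[OF k Suc.prems(2)] by auto
    then show ?case using Suc plant[OF k Suc.prems(2)] by auto
  qed
  have finX: "finite (Xs F u x0 \<theta>)" for \<theta> by (induction \<theta>) auto
  show ?thesis
  proof (intro allI impI ballI)
    fix t \<Lambda> S \<xi> \<sigma>
    assume t: "t < T" and S: "S \<subseteq> {1..K}"
      and pos: "0 < measure M {\<omega>\<in>space M. \<forall>\<theta>\<le>t. x \<theta> \<omega> = \<xi> \<theta> \<and> s \<theta> \<omega> = \<sigma> \<theta>}"
    have finS: "finite S" using S finite_subset by blast
    define E where "E = {\<omega>\<in>space M. x (Suc t) \<omega> \<in> \<Lambda> \<and> s (Suc t) \<omega> \<in> S}"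
    define g where "g i = (if F t (\<xi> t) (u t) \<in> \<Lambda> then q t i else 0)
        + (if F t (\<xi> t) 0 \<in> \<Lambda> then 1 - q t i else 0)" for i
    define c where "c = (\<Sum>i\<in>S. P t (a t) (\<sigma> t) i * g i)"
    define G where "G k \<xi>' \<sigma>' = {\<omega>\<in>space M. \<forall>\<theta>. k \<le> \<theta> \<and> \<theta> \<le> t \<longrightarrow> x \<theta> \<omega> = \<xi>' \<theta> \<and> s \<theta> \<omega> = \<sigma>' \<theta>}"
      for k \<xi>' \<sigma>'
    have Esets: "E \<in> sets M"
    proof -
      have "E = {\<omega>\<in>space M. x (Suc t) \<omega> \<in> \<Lambda>} \<inter> {\<omega>\<in>space M. s (Suc t) \<omega> \<in> S}"
        by (auto simp: E_def)
      then show ?thesis using xset[of "Suc t" \<Lambda>] ssetS t by auto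
    qed
    have Gsets: "G k \<xi>' \<sigma>' \<in> sets M" for k \<xi>' \<sigma>'
    proof -
      have "G k \<xi>' \<sigma>' = {\<omega>\<in>space M. \<forall>\<theta>\<in>{k..t}. x \<theta> \<omega> = \<xi>' \<theta> \<and> s \<theta> \<omega> = \<sigma>' \<theta>}"
        by (auto simp: G_def)
      also have "\<dots> \<in> sets M"
      proof (rule sets.sets_Collect_finite_All)
        fix \<theta> assume "\<theta> \<in> {k..t}"
        then have "\<theta> \<le> T" using t by simp
        have "{\<omega>\<in>space M. x \<theta> \<omega> = \<xi>' \<theta> \<and> s \<theta> \<omega> = \<sigma>' \<theta>}
           = {\<omega>\<in>space M. x \<theta> \<omega> \<in> {\<xi>' \<theta>}} \<inter> {\<omega>\<in>space M. s \<theta> \<omega> = \<sigma>' \<theta>}" by auto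
        note eqn = this
        show "{\<omega>\<in>space M. x \<theta> \<omega> = \<xi>' \<theta> \<and> s \<theta> \<omega> = \<sigma>' \<theta>} \<in> sets M"
          unfolding eqn by (intro sets.Int xset[OF \<open>\<theta> \<le> T\<close>] sset)
      qed simp
      finally show ?thesis .
    qed
    have base: "measure M (E \<inter> G 0 \<xi>' \<sigma>') = c * measure M (G 0 \<xi>' \<sigma>')"
      if eqs: "\<xi>' t = \<xi> t" "\<sigma>' t = \<sigma> t" for \<xi>' \<sigma>'
    proof (cases "measure M (G 0 \<xi>' \<sigma>') = 0")
      case True
      have "measure M (E \<inter> G 0 \<xi>' \<sigma>') \<le> measure M (G 0 \<xi>' \<sigma>')"
        by (rule finite_measure_mono) (auto simp: Gsets)
      then show ?thesis using True by (simp add: measure_le_0_iff)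
    next
      case False
      define H where "H = G 0 \<xi>' \<sigma>'"
      have Hdef: "H = {\<omega>\<in>space M. \<forall>\<theta>\<le>t. x \<theta> \<omega> = \<xi>' \<theta> \<and> s \<theta> \<omega> = \<sigma>' \<theta>}"
        by (auto simp: H_def G_def)
      have Hpos: "0 < measure M H" using False H_def by (simp add: zero_less_measure_iff)
      define Hi where "Hi i = {\<omega>\<in>space M. (\<forall>\<theta>\<le>t. x \<theta> \<omega> = \<xi>' \<theta>) \<and>
          (\<forall>\<theta>\<le>Suc t. s \<theta> \<omega> = (\<sigma>'(Suc t := i)) \<theta>)}" for i
      have Hi_eq: "Hi i = H \<inter> {\<omega>\<in>space M. s (Suc t) \<omega> = i}" for i
      proof (rule set_eqI, rule iffI)
        fix \<omega> assume "\<omega> \<in> Hi i"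
        then show "\<omega> \<in> H \<inter> {\<omega>\<in>space M. s (Suc t) \<omega> = i}"
        proof -
          from \<open>\<omega> \<in> Hi i\<close> have w: "\<omega>\<in>space M" "\<forall>\<theta>\<le>t. x \<theta> \<omega> = \<xi>' \<theta>"
              "\<forall>\<theta>\<le>Suc t. s \<theta> \<omega> = (\<sigma>'(Suc t:=i)) \<theta>" by (auto simp: Hi_def)
          have a1: "s \<theta> \<omega> = \<sigma>' \<theta>" if "\<theta> \<le> t" for \<theta>
          proof -
            have "\<theta> \<le> Suc t" "\<theta> \<noteq> Suc t" using that by auto
            then show ?thesis using w(3) by simp
          qed
          have a2: "s (Suc t) \<omega> = i" using w(3) by simp
          show ?thesis using w a1 a2 by (simp add: Hdef)
        qed
      next
        fix \<omega> assume "\<omega> \<in> H \<inter> {\<omega>\<in>space M. s (Suc t) \<omega> = i}"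
        then show "\<omega> \<in> Hi i" unfolding Hi_def Hdef by (auto simp: le_Suc_eq)
      qed
      have Hsets: "H \<in> sets M" using Gsets H_def by simp
      have Hisets: "Hi i \<in> sets M" for i using Hi_eq Hsets sset by auto
      have mHi: "measure M (Hi i) = P t (a t) (\<sigma> t) i * measure M H" for i
      proof -
        have "cprob M {\<omega>\<in>space M. s (Suc t) \<omega> = i} H = P t (a t) (\<sigma>' t) i"
          unfolding Hdef by (rule regime_trans[OF t]) (use Hpos Hdef in simp)
        moreover have "{\<omega>\<in>space M. s (Suc t) \<omega> = i} \<inter> H = Hi i" using Hi_eq by auto
        ultimately show ?thesis using Hpos eqs by (simp add: cprob_def field_simps)
      qed
      have m1: "measure M ({\<omega>\<in>space M. b t \<omega> = 1} \<inter> Hi i) = q t i * measure M (Hi i)" for i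
      proof (cases "measure M (Hi i) = 0")
        case True
        have "measure M ({\<omega>\<in>space M. b t \<omega> = 1} \<inter> Hi i) \<le> measure M (Hi i)"
          by (rule finite_measure_mono) (auto simp: Hisets)
        then show ?thesis using True by (simp add: measure_le_0_iff)
      next
        case False
        have "cprob M {\<omega>\<in>space M. b t \<omega> = 1} (Hi i) = q t ((\<sigma>'(Suc t := i)) (Suc t))"
          unfolding Hi_def by (rule link_trans[OF t]) (use False in \<open>simp add: Hi_def zero_less_measure_iff\<close>)
        then show ?thesis using False by (simp add: cprob_def field_simps)
      qed
      have m0: "measure M ({\<omega>\<in>space M. b t \<omega> = 0} \<inter> Hi i) = (1 - q t i) * measure M (Hi i)" for i
      proof -
        define A0 where "A0 = {\<omega>\<in>space M. b t \<omega> = 0} \<inter> Hi i"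
        define A1 where "A1 = {\<omega>\<in>space M. b t \<omega> = 1} \<inter> Hi i"
        have eq: "Hi i = A0 \<union> A1"
          using b_range[OF t] sets.sets_into_space[OF Hisets[of i]] unfolding A0_def A1_def by auto
        have u: "measure M (A0 \<union> A1) = measure M A0 + measure M A1"
          by (rule finite_measure_Union) (auto simp: A0_def A1_def intro!: sets.Int bset Hisets)
        have "measure M (Hi i) = measure M A0 + measure M A1" using u eq by simp
        then show ?thesis using m1[of i] unfolding A0_def A1_def by (simp add: algebra_simps)
      qed
      have mEi: "measure M (E \<inter> Hi i) = g i * measure M (Hi i)" if iS: "i \<in> S" for i
      proof -
        define B1 where "B1 = {\<omega>\<in>space M. b t \<omega> = 1} \<inter> Hi i"
        define B0 where "B0 = {\<omega>\<in>space M. b t \<omega> = 0} \<inter> Hi i"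
        have xH: "x (Suc t) \<omega> = F t (\<xi> t) (real (b t \<omega>) *\<^sub>R u t)" if "\<omega> \<in> Hi i" for \<omega>
          using that plant[OF t] eqs unfolding Hi_def by auto
        have sH: "s (Suc t) \<omega> = i" if "\<omega> \<in> Hi i" for \<omega> using that Hi_eq by auto
        have "E \<inter> Hi i = (if F t (\<xi> t) (u t) \<in> \<Lambda> then B1 else {})
             \<union> (if F t (\<xi> t) 0 \<in> \<Lambda> then B0 else {})"
        proof (rule set_eqI, rule iffI)
          fix \<omega> assume w: "\<omega> \<in> E \<inter> Hi i"
          then have "\<omega> \<in> space M" by (auto simp: E_def)
          then have "b t \<omega> = 0 \<or> b t \<omega> = 1" using b_range[OF t] by auto
          then show "\<omega> \<in> (if F t (\<xi> t) (u t) \<in> \<Lambda> then B1 else {})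
             \<union> (if F t (\<xi> t) 0 \<in> \<Lambda> then B0 else {})"
            using w xH[of \<omega>] by (auto simp: E_def B1_def B0_def)
        next
          fix \<omega> assume w: "\<omega> \<in> (if F t (\<xi> t) (u t) \<in> \<Lambda> then B1 else {})
             \<union> (if F t (\<xi> t) 0 \<in> \<Lambda> then B0 else {})"
          then have wH: "\<omega> \<in> Hi i" by (auto simp: B1_def B0_def split: if_splits)
          show "\<omega> \<in> E \<inter> Hi i"
            using w xH[OF wH] sH[OF wH] iS wH by (auto simp: E_def B1_def B0_def split: if_splits)
        qed
        moreover have "B1 \<inter> B0 = {}" by (auto simp: B1_def B0_def)
        moreover have "B1 \<in> sets M" "B0 \<in> sets M" using bset Hisets by (auto simp: B1_def B0_def)
        ultimately have "measure M (E \<inter> Hi i) = (if F t (\<xi> t) (u t) \<in> \<Lambda> then measure M B1 else 0)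
             + (if F t (\<xi> t) 0 \<in> \<Lambda> then measure M B0 else 0)"
          using finite_measure_Union[of "if F t (\<xi> t) (u t) \<in> \<Lambda> then B1 else {}"
              "if F t (\<xi> t) 0 \<in> \<Lambda> then B0 else {}"]
          by (auto split: if_splits)
        then show ?thesis using m1[of i] m0[of i] unfolding B1_def B0_def g_def
          by (simp add: algebra_simps)
      qed
      have EH: "E \<inter> H = (\<Union>i\<in>S. E \<inter> Hi i)" by (auto simp: E_def Hi_eq)
      have "measure M (E \<inter> H) = (\<Sum>i\<in>S. measure M (E \<inter> Hi i))"
        unfolding EH
        by (rule finite_measure_finite_Union)
           (use finS Esets Hisets in \<open>auto simp: disjoint_family_on_def Hi_eq\<close>)
      also have "\<dots> = (\<Sum>i\<in>S. g i * (P t (a t) (\<sigma> t) i * measure M H))"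
        using mEi mHi by simp
      also have "\<dots> = c * measure M H" unfolding c_def sum_distrib_right by (rule sum.cong) (simp_all add: mult_ac)
      finally show ?thesis unfolding H_def .
    qed
    have step: "\<forall>\<xi>' \<sigma>'. \<xi>' t = \<xi> t \<and> \<sigma>' t = \<sigma> t \<longrightarrow>
        measure M (E \<inter> G k \<xi>' \<sigma>') = c * measure M (G k \<xi>' \<sigma>')" if "k \<le> t" for k
      using that
    proof (induction k)
      case 0
      then show ?case using base by blast
    next
      case (Suc k)
      then have kt: "k < t" by simp
      show ?case
      proof (intro allI impI)
        fix \<xi>' \<sigma>' assume eqs: "\<xi>' t = \<xi> t \<and> \<sigma>' t = \<sigma> t"
        define A where "A p = G k (\<xi>'(k := fst p)) (\<sigma>'(k := snd p))" for p
        define I where "I = Xs F u x0 k \<times> {1..K}"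
        have finI: "finite I" using finX by (simp add: I_def)
        have Gdec: "G (Suc k) \<xi>' \<sigma>' = (\<Union>p\<in>I. A p)"
        proof (rule set_eqI, rule iffI)
          fix \<omega> assume w: "\<omega> \<in> G (Suc k) \<xi>' \<sigma>'"
          then have ws: "\<omega> \<in> space M" by (simp add: G_def)
          have "(x k \<omega>, s k \<omega>) \<in> I" unfolding I_def
            using xval[of k \<omega>] s_range[of k \<omega>] ws kt t by auto
          moreover have "\<omega> \<in> A (x k \<omega>, s k \<omega>)"
          proof -
            have wG: "x \<theta> \<omega> = \<xi>' \<theta> \<and> s \<theta> \<omega> = \<sigma>' \<theta>" if "Suc k \<le> \<theta>" "\<theta> \<le> t" for \<theta>
              using w that by (simp add: G_def)
            have "\<forall>\<theta>. k \<le> \<theta> \<and> \<theta> \<le> t \<longrightarrow> x \<theta> \<omega> = (\<xi>'(k:=x k \<omega>)) \<theta> \<and> s \<theta> \<omega> = (\<sigma>'(k:=s k \<omega>)) \<theta>"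
            proof (intro allI impI)
              fix \<theta> assume th: "k \<le> \<theta> \<and> \<theta> \<le> t"
              show "x \<theta> \<omega> = (\<xi>'(k:=x k \<omega>)) \<theta> \<and> s \<theta> \<omega> = (\<sigma>'(k:=s k \<omega>)) \<theta>"
              proof (cases "\<theta> = k")
                case True then show ?thesis by simp
              next
                case False
                then have "Suc k \<le> \<theta>" using th by simp
                then show ?thesis using wG th False by simp
              qed
            qed
            then show ?thesis unfolding A_def G_def fst_conv snd_conv using ws by blast
          qed
          ultimately show "\<omega> \<in> (\<Union>p\<in>I. A p)" by blast
        next
          fix \<omega> assume "\<omega> \<in> (\<Union>p\<in>I. A p)"
          then obtain p where wp: "\<omega> \<in> A p" by blast
          then have ws: "\<omega> \<in> space M" by (simp add: A_def G_def)
          have wA: "x \<theta> \<omega> = (\<xi>'(k:=fst p)) \<theta> \<and> s \<theta> \<omega> = (\<sigma>'(k:=snd p)) \<theta>" if "k \<le> \<theta>" "\<theta> \<le> t" for \<theta>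
            using wp that by (simp add: A_def G_def)
          have "\<forall>\<theta>. Suc k \<le> \<theta> \<and> \<theta> \<le> t \<longrightarrow> x \<theta> \<omega> = \<xi>' \<theta> \<and> s \<theta> \<omega> = \<sigma>' \<theta>"
          proof (intro allI impI)
            fix \<theta> assume th: "Suc k \<le> \<theta> \<and> \<theta> \<le> t"
            then have "k \<le> \<theta>" "\<theta> \<noteq> k" by auto
            then show "x \<theta> \<omega> = \<xi>' \<theta> \<and> s \<theta> \<omega> = \<sigma>' \<theta>" using wA[of \<theta>] th by simp
          qed
          then show "\<omega> \<in> G (Suc k) \<xi>' \<sigma>'" using ws unfolding G_def by blast
        qed
        have disj: "disjoint_family_on A I"
          unfolding disjoint_family_on_def
        proof (intro ballI impI)
          fix p p' assume "p \<in> I" "p' \<in> I" "p \<noteq> p'"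
          show "A p \<inter> A p' = {}"
          proof (rule ccontr)
            assume "A p \<inter> A p' \<noteq> {}"
            then obtain \<omega> where "\<omega> \<in> A p" "\<omega> \<in> A p'" by blast
            then have "x k \<omega> = fst p \<and> s k \<omega> = snd p" "x k \<omega> = fst p' \<and> s k \<omega> = snd p'"
              using kt unfolding A_def G_def by auto
            then show False using \<open>p \<noteq> p'\<close> by (simp add: prod_eq_iff)
          qed
        qed
        have Asets: "A ` I \<subseteq> sets M" using Gsets by (auto simp: A_def)
        have IH: "measure M (E \<inter> A p) = c * measure M (A p)" for p
          unfolding A_def using Suc.IH kt eqs by simp
        have "measure M (E \<inter> G (Suc k) \<xi>' \<sigma>') = measure M (\<Union>p\<in>I. E \<inter> A p)"
          by (simp add: Gdec)
        also have "\<dots> = (\<Sum>p\<in>I. measure M (E \<inter> A p))"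
        proof (rule finite_measure_finite_Union[OF finI])
          show "disjoint_family_on (\<lambda>p. E \<inter> A p) I"
            using disj unfolding disjoint_family_on_def by blast
          show "(\<lambda>p. E \<inter> A p) ` I \<subseteq> sets M" using Esets Asets by auto
        qed
        also have "\<dots> = c * (\<Sum>p\<in>I. measure M (A p))" by (simp add: IH sum_distrib_left)
        also have "(\<Sum>p\<in>I. measure M (A p)) = measure M (G (Suc k) \<xi>' \<sigma>')"
          unfolding Gdec by (rule finite_measure_finite_Union[symmetric]) (use finI Asets disj in auto)
        finally show "measure M (E \<inter> G (Suc k) \<xi>' \<sigma>') = c * measure M (G (Suc k) \<xi>' \<sigma>')" .
      qed
    qed
    have G0: "G 0 \<xi> \<sigma> = {\<omega>\<in>space M. \<forall>\<theta>\<le>t. x \<theta> \<omega> = \<xi> \<theta> \<and> s \<theta> \<omega> = \<sigma> \<theta>}"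
      by (auto simp: G_def)
    have Gt: "G t \<xi> \<sigma> = {\<omega>\<in>space M. x t \<omega> = \<xi> t \<and> s t \<omega> = \<sigma> t}"
      by (auto simp: G_def)
    have e0: "measure M (E \<inter> G 0 \<xi> \<sigma>) = c * measure M (G 0 \<xi> \<sigma>)" using step[of 0] by blast
    have et: "measure M (E \<inter> G t \<xi> \<sigma>) = c * measure M (G t \<xi> \<sigma>)" using step[of t, OF order_refl] by blast
    have "measure M (G 0 \<xi> \<sigma>) \<le> measure M (G t \<xi> \<sigma>)"
      by (rule finite_measure_mono[OF _ Gsets]) (auto simp: G_def)
    then have pt: "0 < measure M (G t \<xi> \<sigma>)" using pos G0 by simp
    have p0: "0 < measure M (G 0 \<xi> \<sigma>)" using pos G0 by simp
    show "cprob M {\<omega>\<in>space M. x (Suc t) \<omega> \<in> \<Lambda> \<and> s (Suc t) \<omega> \<in> S}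
                  {\<omega>\<in>space M. \<forall>\<theta>\<le>t. x \<theta> \<omega> = \<xi> \<theta> \<and> s \<theta> \<omega> = \<sigma> \<theta>}
          = cprob M {\<omega>\<in>space M. x (Suc t) \<omega> \<in> \<Lambda> \<and> s (Suc t) \<omega> \<in> S}
                  {\<omega>\<in>space M. x t \<omega> = \<xi> t \<and> s t \<omega> = \<sigma> t}"
      unfolding cprob_def E_def[symmetric] G0[symmetric] Gt[symmetric]
      using e0 et pt p0 by simp
  qed
qed

end
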